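(* Let $G$ be a finite simple graph containing at least one critical vertex. Let $a \geq 1$ and let $r_1, \ldots, r_a$ be positive integers with $1 + \sum_{i=1}^a r_i = \chi(G)$. Among all $(r_1, \ldots, r_a)$-partitioned colorings of $G$, choose one, $\pi = \{\{x\}, L_{11}, \ldots, L_{1r_1}, \ldots, L_{a1}, \ldots, L_{ar_a}\}$, minimizing \[\sum_{i=1}^a \left\| G\Big[\bigcup_{j=1}^{r_i} L_{ij}\Big] \right\|.\] Put $U_i = \bigcup_{j=1}^{r_i} L_{ij}$ and let $Z_i(x)$ be the connected component containing $x$ of $G[\{x\} \cup U_i]$. If $1 \leq i \leq a$ and $d_{Z_i(x)}(x) = r_i$, then $Z_i(x)$ is a complete graph if $r_i \geq 3$, and $Z_i(x)$ is an odd cycle if $r_i = 2$.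
   Context: A vertex $v$ of $G$ is critical if $\chi(G - v) < \chi(G)$. For a graph $H$, $\|H\|$ denotes the number of edges of $H$, and $d_H(v)$ the degree of $v$ in $H$. Given $a \geq 1$ and $r_1, \ldots, r_a$ with $1 + \sum_i r_i = \chi(G)$, an $(r_1, \ldots, r_a)$-partitioned coloring of $G$ is a proper coloring of $G$ with exactly $\chi(G)$ color classes, written in the form $\{\{x\}, L_{11}, \ldots, L_{1r_1}, L_{21}, \ldots, L_{2r_2}, \ldots, L_{a1}, \ldots, L_{ar_a}\}$, where $\{x\}$ is a singleton color class (for some vertex $x$) and each $L_{ij}$ is a color class. *)

theory Defs
  imports Main
begin

definition simple_graph :: "'a set \<Rightarrow> 'a set set \<Rightarrow> bool" where
  "simple_graph V E \<longleftrightarrow> finite V \<and>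
     (\<forall>e\<in>E. \<exists>u v. e = {u, v} \<and> u \<noteq> v \<and> u \<in> V \<and> v \<in> V)"

definition colorable :: "'a set \<Rightarrow> 'a set set \<Rightarrow> nat \<Rightarrow> bool" where
  "colorable V E k \<longleftrightarrow> (\<exists>f :: 'a \<Rightarrow> nat. (\<forall>v\<in>V. f v < k) \<and>
     (\<forall>u\<in>V. \<forall>v\<in>V. {u, v} \<in> E \<longrightarrow> f u \<noteq> f v))"

definition chi :: "'a set \<Rightarrow> 'a set set \<Rightarrow> nat" where
  "chi V E = (LEAST k. colorable V E k)"

definition del_vertex_edges :: "'a set set \<Rightarrow> 'a \<Rightarrow> 'a set set" where
  "del_vertex_edges E v = {e \<in> E. v \<notin> e}"

definition critical_vertex :: "'a set \<Rightarrow> 'a set set \<Rightarrow> 'a \<Rightarrow> bool" where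
  "critical_vertex V E v \<longleftrightarrow> v \<in> V \<and>
     chi (V - {v}) (del_vertex_edges E v) < chi V E"

definition induced_edges :: "'a set set \<Rightarrow> 'a set \<Rightarrow> 'a set set" where
  "induced_edges E S = {e \<in> E. e \<subseteq> S}"

definition num_induced_edges :: "'a set set \<Rightarrow> 'a set \<Rightarrow> nat" where
  "num_induced_edges E S = card (induced_edges E S)"

text \<open>An (r_1,...,r_a)-partitioned coloring {{x}, L_11, ..., L_{a r_a}}: color classes
  {x} and L i j (1 \<le> i \<le> a, 1 \<le> j \<le> r i), nonempty, pairwise disjoint,
  independent, covering V. (The requirement of exactly chi(G) classes is
  1 + sum r_i = chi(G), which is a hypothesis of the theorem.)\<close>
definition partitioned_coloring ::
  "'a set \<Rightarrow> 'a set set \<Rightarrow> nat \<Rightarrow> (nat \<Rightarrow> nat) \<Rightarrow> 'a \<Rightarrow> (nat \<Rightarrow> nat \<Rightarrow> 'a set) \<Rightarrow> bool" where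
  "partitioned_coloring V E a r x L \<longleftrightarrow>
     x \<in> V \<and>
     (\<forall>i\<in>{1..a}. \<forall>j\<in>{1..r i}.
        L i j \<subseteq> V \<and> L i j \<noteq> {} \<and> x \<notin> L i j \<and>
        (\<forall>u\<in>L i j. \<forall>v\<in>L i j. {u, v} \<notin> E)) \<and>
     (\<forall>i\<in>{1..a}. \<forall>j\<in>{1..r i}. \<forall>i'\<in>{1..a}. \<forall>j'\<in>{1..r i'}.
        (i, j) \<noteq> (i', j') \<longrightarrow> L i j \<inter> L i' j' = {}) \<and>
     V = {x} \<union> (\<Union>i\<in>{1..a}. \<Union>j\<in>{1..r i}. L i j)"

definition U_part :: "(nat \<Rightarrow> nat) \<Rightarrow> (nat \<Rightarrow> nat \<Rightarrow> 'a set) \<Rightarrow> nat \<Rightarrow> 'a set" where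
  "U_part r L i = (\<Union>j\<in>{1..r i}. L i j)"

definition pc_cost :: "'a set set \<Rightarrow> nat \<Rightarrow> (nat \<Rightarrow> nat) \<Rightarrow> (nat \<Rightarrow> nat \<Rightarrow> 'a set) \<Rightarrow> nat" where
  "pc_cost E a r L = (\<Sum>i=1..a. num_induced_edges E (U_part r L i))"

definition component :: "'a set set \<Rightarrow> 'a set \<Rightarrow> 'a \<Rightarrow> 'a set" where
  "component E S x = {y. (\<lambda>u v. u \<in> S \<and> v \<in> S \<and> {u, v} \<in> E)\<^sup>*\<^sup>* x y \<and> y \<in> S}"

definition degree :: "'a set set \<Rightarrow> 'a \<Rightarrow> nat" where
  "degree F v = card {u. {v, u} \<in> F \<and> u \<noteq> v}"

definition complete_graph :: "'a set \<Rightarrow> 'a set set \<Rightarrow> bool" where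
  "complete_graph C F \<longleftrightarrow> (\<forall>u\<in>C. \<forall>v\<in>C. u \<noteq> v \<longrightarrow> {u, v} \<in> F)"

definition odd_cycle :: "'a set \<Rightarrow> 'a set set \<Rightarrow> bool" where
  "odd_cycle C F \<longleftrightarrow> (\<exists>vs. distinct vs \<and> set vs = C \<and> length vs \<ge> 3 \<and> odd (length vs) \<and>
     F = {{vs ! k, vs ! ((k + 1) mod length vs)} | k. k < length vs})"

end

theory Submission
  imports Defs
begin


locale crit =
  fixes W :: "'a set" and adj :: "'a \<Rightarrow> 'a \<Rightarrow> bool" and r :: nat
  assumes fin: "finite W"
    and sym: "\<And>u v. adj u v \<Longrightarrow> adj v u"
    and irr: "\<And>u. \<not> adj u u"
    and nocol: "\<And>f. \<not> ((\<forall>u\<in>W. f u < r) \<and> (\<forall>u\<in>W. \<forall>v\<in>W. adj u v \<longrightarrow> f u \<noteq> f v))"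
    and degle: "\<And>y f. y \<in> W \<Longrightarrow> (\<forall>u\<in>W-{y}. f u < r) \<Longrightarrow>
        (\<forall>u\<in>W-{y}. \<forall>v\<in>W-{y}. adj u v \<longrightarrow> f u \<noteq> f v) \<Longrightarrow> card {u\<in>W. adj y u} \<le> r"
begin

definition N where "N y = {u\<in>W. adj y u}"
definition state where "state y f \<longleftrightarrow> y \<in> W \<and> (\<forall>u\<in>W-{y}. f u < r) \<and>
   (\<forall>u\<in>W-{y}. \<forall>v\<in>W-{y}. adj u v \<longrightarrow> f u \<noteq> f v)"

lemma ex_col: assumes "state y f" "c < r" shows "\<exists>u\<in>W. adj y u \<and> f u = c"
proof (rule ccontr)
  assume h: "\<not> ?thesis"
  let ?g = "f(y := c)"
  have "(\<forall>u\<in>W. ?g u < r) \<and> (\<forall>u\<in>W. \<forall>v\<in>W. adj u v \<longrightarrow> ?g u \<noteq> ?g v)"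
  proof (intro conjI ballI impI)
    fix u assume "u \<in> W" thus "?g u < r" using assms unfolding state_def by auto
  next
    fix u v assume uv: "u \<in> W" "v \<in> W" "adj u v"
    show "?g u \<noteq> ?g v"
    proof (cases "u = y")
      case True
      hence "v \<noteq> y" using uv irr by auto
      thus ?thesis using True h uv by auto
    next
      case False
      show ?thesis
      proof (cases "v = y")
        case True thus ?thesis using False h uv sym by auto
      next
        case F2: False thus ?thesis using False uv assms unfolding state_def by auto
      qed
    qed
  qed
  with nocol show False by blast
qed

lemma N_sub: "N y \<subseteq> W - {y}" using irr by (auto simp: N_def)
lemma fN: "finite (N y)" using fin by (simp add: N_def)

lemma img: assumes "state y f" shows "f ` N y = {0..<r}"
proof
  show "f ` N y \<subseteq> {0..<r}" using N_sub[of y] assms unfolding state_def by auto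
  show "{0..<r} \<subseteq> f ` N y" using ex_col[OF assms] by (force simp: N_def)
qed

lemma inj_N: assumes "state y f" shows "inj_on f (N y)" "card (N y) = r"
proof -
  have "card (N y) \<le> r" using degle assms unfolding state_def N_def by blast
  hence "card (f ` N y) = card (N y)" using img[OF assms] card_image_le[OF fN, of f y] by simp
  thus "inj_on f (N y)" using eq_card_imp_inj_on fN by blast
  thus "card (N y) = r" using img[OF assms] card_image by fastforce
qed

lemma uniq_col: assumes "state y f" "adj y u" "adj y u'" "u \<in> W" "u' \<in> W" "f u = f u'" shows "u = u'"
  using inj_N(1)[OF assms(1)] assms by (auto simp: N_def inj_on_def)

lemma move: assumes "state y f" "adj y u" "u \<in> W" shows "state u (f(y := f u))"
proof -
  have yu: "y \<noteq> u" using assms irr by auto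
  have yW: "y \<in> W" using assms state_def by auto
  have fu: "f u < r" using assms yu unfolding state_def by auto
  show ?thesis unfolding state_def
  proof (intro conjI ballI impI)
    show "u \<in> W" by fact
  next
    fix v assume "v \<in> W - {u}" thus "(f(y := f u)) v < r" using fu assms unfolding state_def by auto
  next
    fix v w assume vw: "v \<in> W - {u}" "w \<in> W - {u}" "adj v w"
    show "(f(y := f u)) v \<noteq> (f(y := f u)) w"
    proof (cases "v = y")
      case True
      hence "w \<noteq> y" using vw irr by auto
      hence "f w \<noteq> f u" using uniq_col[OF assms(1), of w u] vw True assms by auto
      thus ?thesis using True \<open>w \<noteq> y\<close> by auto
    next
      case False
      show ?thesis
      proof (cases "w = y")
        case True
        hence "f v \<noteq> f u" using uniq_col[OF assms(1), of v u] vw assms sym by auto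
        thus ?thesis using True False by auto
      next
        case F2: False thus ?thesis using False vw assms unfolding state_def by auto
      qed
    qed
  qed
qed

definition X where "X y f j k = {y} \<union> {u \<in> W - {y}. f u = j \<or> f u = k}"
definition reach where "reach S = (\<lambda>a b. a \<in> S \<and> b \<in> S \<and> adj a b)\<^sup>*\<^sup>*"

lemma X_sym: "X y f j k = X y f k j" by (auto simp: X_def)

lemma reach_in: "reach S a b \<Longrightarrow> a \<in> S \<Longrightarrow> b \<in> S"
  unfolding reach_def by (induction rule: rtranclp_induct) auto

lemma reach_step: "reach S a b \<Longrightarrow> b \<in> S \<Longrightarrow> c \<in> S \<Longrightarrow> adj b c \<Longrightarrow> reach S a c"
  unfolding reach_def by (simp add: rtranclp.rtrancl_into_rtrancl)

lemma move_reach: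
  assumes "state y f" "reach (X y f j k) y z"
  shows "\<exists>g. state z g \<and> X z g j k = X y f j k \<and> (\<forall>u\<in>W - X y f j k. g u = f u)"
  using assms(2) unfolding reach_def
proof (induction rule: rtranclp_induct)
  case base thus ?case using assms(1) by blast
next
  case (step z' z)
  then obtain g where g: "state z' g" "X z' g j k = X y f j k" "\<forall>u\<in>W - X y f j k. g u = f u" by blast
  have zX: "z \<in> X z' g j k" "z' \<in> X z' g j k" "adj z' z" using step g by auto
  have zW: "z \<in> W" using zX g(1) by (auto simp: X_def state_def)
  have ne: "z \<noteq> z'" using zX irr by auto
  have gz: "g z = j \<or> g z = k" using zX ne by (auto simp: X_def)
  have st: "state z (g(z' := g z))" using move[OF g(1) zX(3) zW] .
  have z'W: "z' \<in> W" using g(1) state_def by auto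
  have "X z (g(z' := g z)) j k = X z' g j k"
    using ne gz zW z'W zX(1) by (auto simp: X_def)
  moreover have "\<forall>u\<in>W - X y f j k. (g(z' := g z)) u = f u"
    using g(3) zX(2) g(2) by auto
  ultimately show ?case using st g(2) by auto
qed

lemma two:
  assumes "state y f" "j \<noteq> k" "j < r" "k < r" "reach (X y f j k) y z"
  shows "card {w \<in> X y f j k. adj z w} = 2" "card (N z) = r"
proof -
  obtain g where g: "state z g" "X z g j k = X y f j k" using move_reach[OF assms(1,5)] by blast
  show "card (N z) = r" using inj_N(2)[OF g(1)] .
  obtain uj where uj: "uj \<in> W" "adj z uj" "g uj = j" using ex_col[OF g(1) assms(3)] by blast
  obtain uk where uk: "uk \<in> W" "adj z uk" "g uk = k" using ex_col[OF g(1) assms(4)] by blast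
  have "{w \<in> X z g j k. adj z w} = {uj, uk}"
  proof
    show "{w \<in> X z g j k. adj z w} \<subseteq> {uj, uk}"
    proof
      fix w assume w: "w \<in> {w \<in> X z g j k. adj z w}"
      hence "w \<noteq> z" using irr by auto
      hence "w \<in> W" "g w = j \<or> g w = k" using w by (auto simp: X_def)
      thus "w \<in> {uj, uk}" using uniq_col[OF g(1)] w uj uk by auto
    qed
    show "{uj, uk} \<subseteq> {w \<in> X z g j k. adj z w}" using uj uk irr by (auto simp: X_def)
  qed
  moreover have "uj \<noteq> uk" using uj uk assms(2) by auto
  ultimately show "card {w \<in> X y f j k. adj z w} = 2" using g(2) by simp
qed

lemma reach_mono: assumes "S \<subseteq> T" "reach S a b" shows "reach T a b"
  using assms(2) unfolding reach_def
  by (induction rule: rtranclp_induct) (use assms(1) in \<open>auto intro: rtranclp.rtrancl_into_rtrancl\<close>)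

lemma reach_refl: "reach S a a" unfolding reach_def by simp

lemma vX: "y \<in> X y f j k" by (simp add: X_def)

lemma noC:
  assumes st: "state v c" and ij: "i \<noteq> j" "i \<noteq> k" "j \<noteq> k" "i < r" "j < r" "k < r"
    and yj: "reach (X v c i j) v y" and yk: "reach (X v c i k) v y" and yv: "y \<noteq> v" "\<not> adj y v"
  shows False
proof -
  have vW: "v \<in> W" using st state_def by auto
  have yXj: "y \<in> X v c i j" using reach_in[OF yj vX] .
  have yXk: "y \<in> X v c i k" using reach_in[OF yk vX] .
  have yW: "y \<in> W" and cy: "c y = i" using yXj yXk yv ij by (auto simp: X_def)
  define A where "A = {w \<in> X v c i j. adj y w}"
  define B where "B = {w \<in> X v c i k. adj y w}"
  have cA: "card A = 2" using two(1)[OF st ij(1) ij(4) ij(5) yj] A_def by simp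
  have cB: "card B = 2" using two(1)[OF st ij(2) ij(4) ij(6) yk] B_def by simp
  have cN: "card (N y) = r" using two(2)[OF st ij(1) ij(4) ij(5) yj] .
  have Aj: "\<And>w. w \<in> A \<Longrightarrow> w \<in> W \<and> adj y w \<and> c w = j"
  proof -
    fix w assume w: "w \<in> A"
    hence "w \<noteq> v" using yv(2) sym by (auto simp: A_def)
    hence "w \<in> W - {v}" "c w = i \<or> c w = j" "adj y w" using w by (auto simp: A_def X_def)
    moreover have "c y \<noteq> c w" using st yW yv \<open>w \<in> W - {v}\<close> \<open>adj y w\<close> unfolding state_def by auto
    ultimately show "w \<in> W \<and> adj y w \<and> c w = j" using cy by auto
  qed
  have Bk: "\<And>w. w \<in> B \<Longrightarrow> w \<in> W \<and> adj y w \<and> c w = k"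
  proof -
    fix w assume w: "w \<in> B"
    hence "w \<noteq> v" using yv(2) sym by (auto simp: B_def)
    hence "w \<in> W - {v}" "c w = i \<or> c w = k" "adj y w" using w by (auto simp: B_def X_def)
    moreover have "c y \<noteq> c w" using st yW yv \<open>w \<in> W - {v}\<close> \<open>adj y w\<close> unfolding state_def by auto
    ultimately show "w \<in> W \<and> adj y w \<and> c w = k" using cy by auto
  qed
  have ABN: "A \<union> B \<subseteq> N y" using Aj Bk by (auto simp: N_def)
  have ABd: "A \<inter> B = {}" using Aj Bk ij by fastforce
  have finAB: "finite A" "finite B" using cA cB by (auto intro: card_ge_0_finite)
  have cAB: "card (A \<union> B) = 4" using card_Un_disjoint[OF finAB ABd] cA cB by simp
  have r4: "r \<ge> 4" using card_mono[OF fN ABN] cAB cN by simp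
  have cRest: "card (N y - (A \<union> B)) = r - 4"
    using card_Diff_subset[OF _ ABN] cAB cN finAB by simp
  obtain l where l: "l < r" "l \<noteq> i" "l \<noteq> j" "l \<noteq> k" "\<forall>w\<in>N y. c w \<noteq> l"
  proof (rule ccontr)
    assume "\<not> thesis"
    with that have h: "\<forall>l\<in>{0..<r} - {i,j,k}. \<exists>w\<in>N y. c w = l" by fastforce
    have "{0..<r} - {i,j,k} \<subseteq> c ` (N y - (A \<union> B))"
    proof
      fix l assume l: "l \<in> {0..<r} - {i,j,k}"
      then obtain w where w: "w \<in> N y" "c w = l" using h by blast
      have "w \<notin> A \<union> B" using Aj Bk w l by fastforce
      thus "l \<in> c ` (N y - (A \<union> B))" using w by blast
    qed
    hence "card ({0..<r} - {i,j,k}) \<le> card (c ` (N y - (A \<union> B)))"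
      by (intro card_mono) (auto intro: finite_imageI finite_Diff fN)
    also have "\<dots> \<le> card (N y - (A \<union> B))" by (intro card_image_le finite_Diff fN)
    finally have "card ({0..<r} - {i,j,k}) \<le> r - 4" using cRest by simp
    moreover have "card ({0..<r} - {i,j,k}) = r - 3"
      using ij by (subst card_Diff_subset) auto
    ultimately show False using r4 by simp
  qed
  define c2 where "c2 = c(y := l)"
  have st2: "state v c2" unfolding state_def
  proof (intro conjI ballI impI)
    show "v \<in> W" by fact
  next
    fix u assume "u \<in> W - {v}" thus "c2 u < r" using st l unfolding state_def c2_def by auto
  next
    fix u w assume uw: "u \<in> W - {v}" "w \<in> W - {v}" "adj u w"
    show "c2 u \<noteq> c2 w"
    proof (cases "u = y")
      case True
      hence "w \<noteq> y" using uw irr by auto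
      thus ?thesis using True uw l(5) unfolding c2_def N_def by auto
    next
      case False
      show ?thesis
      proof (cases "w = y")
        case True thus ?thesis using False uw l(5) sym unfolding c2_def N_def by auto
      next
        case F2: False thus ?thesis using False uw st unfolding state_def c2_def by auto
      qed
    qed
  qed
  have X2: "X v c2 i j = X v c i j - {y}" using l yv unfolding X_def c2_def by auto
  have "\<exists>a\<in>A. reach (X v c2 i j) v a"
  proof (rule ccontr)
    assume na: "\<not> ?thesis"
    have "reach (X v c i j) v z \<Longrightarrow> reach (X v c2 i j) v z" for z
      unfolding reach_def[of "X v c i j"]
    proof (induction rule: rtranclp_induct)
      case base thus ?case by (rule reach_refl)
    next
      case (step z' z)
      have z'X2: "z' \<in> X v c2 i j" using reach_in[OF step.IH vX] .
      have "z \<noteq> y"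
      proof
        assume "z = y"
        hence "z' \<in> A" using step z'X2 X2 sym by (auto simp: A_def)
        thus False using na step.IH by blast
      qed
      hence "z \<in> X v c2 i j" using step X2 by auto
      thus ?case using reach_step[OF step.IH z'X2] step by auto
    qed
    from this[OF yj] have "y \<in> X v c2 i j" using reach_in vX by metis
    thus False using X2 by auto
  qed
  then obtain a where a: "a \<in> A" "reach (X v c2 i j) v a" by blast
  have aW: "a \<in> W" "adj y a" using Aj[OF a(1)] by auto
  have aX: "a \<in> X v c i j" using a(1) by (auto simp: A_def)
  have c2a: "card {w \<in> X v c2 i j. adj a w} = 2" using two(1)[OF st2 ij(1) ij(4) ij(5) a(2)] .
  have ra: "reach (X v c i j) v a" using reach_step[OF yj yXj aX aW(2)] .
  have c1a: "card {w \<in> X v c i j. adj a w} = 2" using two(1)[OF st ij(1) ij(4) ij(5) ra] .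
  have "{w \<in> X v c2 i j. adj a w} = {w \<in> X v c i j. adj a w} - {y}" using X2 by auto
  moreover have "y \<in> {w \<in> X v c i j. adj a w}" using yXj aW sym by auto
  ultimately have "card {w \<in> X v c2 i j. adj a w} = 1" using c1a
    by (metis (no_types, lifting) One_nat_def card.infinite card_Diff_singleton diff_Suc_1 numeral_2_eq_2 zero_neq_numeral)
  thus False using c2a by simp
qed

lemma handshake: assumes "finite R" shows "even (\<Sum>z\<in>R. card {w\<in>R. adj z w})"
  using assms
proof (induction R rule: finite_induct)
  case empty thus ?case by simp
next
  case (insert y R)
  have 1: "{w\<in>insert y R. adj y w} = {w\<in>R. adj y w}" using irr by auto
  have 2: "card {w\<in>insert y R. adj z w} = card {w\<in>R. adj z w} + (if adj z y then 1 else 0)"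
    if z: "z \<in> R" for z
  proof (cases "adj z y")
    case True
    hence "{w\<in>insert y R. adj z w} = insert y {w\<in>R. adj z w}" by auto
    thus ?thesis using insert True by simp
  next
    case False
    hence "{w\<in>insert y R. adj z w} = {w\<in>R. adj z w}" by auto
    thus ?thesis using False by simp
  qed
  have 3: "(\<Sum>z\<in>R. (if adj z y then 1 else 0::nat)) = card {w\<in>R. adj y w}"
  proof -
    have "{z\<in>R. adj z y} = {w\<in>R. adj y w}" using sym by auto
    thus ?thesis using insert by (simp add: sum.If_cases Int_def)
  qed
  have "(\<Sum>z\<in>insert y R. card {w\<in>insert y R. adj z w})
      = card {w\<in>R. adj y w} + (\<Sum>z\<in>R. card {w\<in>insert y R. adj z w})" using insert 1 by simp
  also have "(\<Sum>z\<in>R. card {w\<in>insert y R. adj z w}) = (\<Sum>z\<in>R. card {w\<in>R. adj z w}) + card {w\<in>R. adj y w}"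
    using 2 3 by (simp add: sum.distrib)
  finally show ?case using insert by simp
qed

lemma clique:
  assumes st: "state v c" and r3: "3 \<le> r" and p: "p \<in> N v" and q: "q \<in> N v" and pq: "p \<noteq> q"
  shows "adj p q"
proof (rule ccontr)
  assume npq: "\<not> adj p q"
  have vW: "v \<in> W" using st state_def by auto
  have pW: "p \<in> W" "adj v p" "p \<noteq> v" using p irr by (auto simp: N_def)
  have qW: "q \<in> W" "adj v q" "q \<noteq> v" using q irr by (auto simp: N_def)
  define i where "i = c p"
  define k where "k = c q"
  have ir: "i < r" "k < r" using st pW qW unfolding state_def i_def k_def by auto
  have ik: "i \<noteq> k" using uniq_col[OF st pW(2) qW(2) pW(1) qW(1)] pq i_def k_def by auto
  obtain m where m: "m < r" "m \<noteq> i" "m \<noteq> k"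
  proof -
    have "\<exists>m\<in>{0,1,2}. m \<noteq> i \<and> m \<noteq> k" using ik by auto
    then obtain m where "m \<in> {0,1,2::nat}" "m \<noteq> i" "m \<noteq> k" by blast
    thus ?thesis using that[of m] r3 by auto
  qed
  define Xik where "Xik = X v c i k"
  have pXik: "p \<in> Xik" using pW i_def by (simp add: Xik_def X_def)
  have vXik: "v \<in> Xik" by (simp add: Xik_def vX)
  have reach_p: "reach Xik v p" using reach_step[OF reach_refl[of Xik v] vXik pXik pW(2)] .
  have "card {w \<in> Xik. adj p w} = 2" using two(1)[OF st ik ir reach_p[unfolded Xik_def]] Xik_def by simp
  then obtain a b where ab: "{w \<in> Xik. adj p w} = {a, b}" "a \<noteq> b" by (auto simp: card_2_iff)
  have vin: "v \<in> {w \<in> Xik. adj p w}" using pW sym vX by (auto simp: Xik_def)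
  obtain w where Np: "{w' \<in> Xik. adj p w'} = {v, w}" "w \<noteq> v"
    using ab vin by (metis empty_iff insert_commute insert_iff)
  have wX: "w \<in> Xik" "adj p w" using Np by auto
  have wW: "w \<in> W" "c w = i \<or> c w = k" using wX Np(2) by (auto simp: Xik_def X_def)
  have pw: "p \<in> W - {v}" "w \<in> W - {v}" using pW wW Np(2) by auto
  have "c p \<noteq> c w" using st pw wX(2) unfolding state_def by blast
  hence "c w \<noteq> c p" by simp
  hence cw: "c w = k" using wW i_def by auto
  have wq: "w \<noteq> q" using wX npq by auto
  have wv: "\<not> adj w v"
  proof
    assume "adj w v"
    hence "w = q" using uniq_col[OF st _ qW(2) wW(1) qW(1)] sym cw k_def by auto
    thus False using wq by simp
  qed
  define Xim where "Xim = X v c i m"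
  have vXim: "v \<in> Xim" by (simp add: Xim_def vX)
  define S where "S = {z. reach Xim v z} - {v}"
  define sw where "sw t = (if t = i then m else if t = m then i else t)" for t
  define c' where "c' u = (if u \<in> S then sw (c u) else c u)" for u
  have Scol: "z \<in> W \<and> z \<noteq> v \<and> (c z = i \<or> c z = m)" if "z \<in> S" for z
    using that reach_in[of Xim v z] vXim by (auto simp: S_def Xim_def X_def)
  have st': "state v c'" unfolding state_def
  proof (intro conjI ballI impI)
    show "v \<in> W" by fact
  next
    fix u assume "u \<in> W - {v}" thus "c' u < r" using st ir m unfolding state_def c'_def sw_def by auto
  next
    fix u1 u2 assume u: "u1 \<in> W - {v}" "u2 \<in> W - {v}" "adj u1 u2"
    have neq: "c u1 \<noteq> c u2" using st u unfolding state_def by auto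
    have cross: "c u2 \<noteq> i \<and> c u2 \<noteq> m" if "u1 \<in> S" "u2 \<notin> S" "u1 \<in> W - {v}" "u2 \<in> W - {v}" "adj u1 u2" for u1 u2
    proof (rule ccontr)
      assume "\<not> (c u2 \<noteq> i \<and> c u2 \<noteq> m)"
      hence "u2 \<in> Xim" using that by (auto simp: Xim_def X_def)
      moreover have "reach Xim v u1" "u1 \<in> Xim" using that reach_in[of Xim v u1] vXim
        by (auto simp: S_def Xim_def)
      ultimately have "reach Xim v u2" using reach_step that by blast
      thus False using that by (auto simp: S_def)
    qed
    show "c' u1 \<noteq> c' u2"
    proof (cases "u1 \<in> S")
      case True
      show ?thesis
      proof (cases "u2 \<in> S")
        case True
        thus ?thesis using \<open>u1 \<in> S\<close> Scol neq m unfolding c'_def sw_def by (auto split: if_splits)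
      next
        case False
        thus ?thesis using cross[of u1 u2] True u Scol[of u1] unfolding c'_def sw_def by auto
      qed
    next
      case False
      show ?thesis
      proof (cases "u2 \<in> S")
        case True
        thus ?thesis using cross[of u2 u1] False u sym Scol[of u2] unfolding c'_def sw_def by auto
      next
        case F2: False
        thus ?thesis using False neq unfolding c'_def by auto
      qed
    qed
  qed
  have pXim: "p \<in> Xim" using pW i_def by (simp add: Xim_def X_def)
  have pS: "p \<in> S" using reach_step[OF reach_refl[of Xim v] vXim pXim pW(2)] pW by (simp add: S_def)
  have c'p: "c' p = m" using pS i_def unfolding c'_def sw_def by simp
  have wS: "w \<notin> S" using Scol[of w] cw ik m by auto
  have c'w: "c' w = k" using wS cw unfolding c'_def by simp
  have r1: "reach (X v c' k m) v w"
  proof -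
    have "p \<in> X v c' k m" "w \<in> X v c' k m" using c'p c'w pW wW wv Np(2) by (auto simp: X_def)
    hence "reach (X v c' k m) v p" using reach_step[OF reach_refl[of "X v c' k m" v] vX _ pW(2)] by blast
    thus ?thesis using reach_step[of "X v c' k m" v p w] \<open>p \<in> X v c' k m\<close> \<open>w \<in> X v c' k m\<close> wX by blast
  qed
  define D where "D = Xik - {p}"
  define R where "R = {z. reach D v z}"
  have vD: "v \<in> D" using pW vX by (simp add: D_def Xik_def)
  have RK: "reach Xik v z" if "z \<in> R" for z using that reach_mono[of D Xik] by (auto simp: R_def D_def)
  have RD: "R \<subseteq> D" using reach_in[OF _ vD] by (auto simp: R_def)
  have wR: "w \<in> R"
  proof (rule ccontr)
    assume wR: "w \<notin> R"
    have "D \<subseteq> W" using vW by (auto simp: D_def Xik_def X_def)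
    hence finR: "finite R" using finite_subset[OF RD finite_subset[OF _ fin]] by blast
    have clos: "{u\<in>R. adj z u} = {u \<in> Xik. adj z u} - {p}" if z: "z \<in> R" for z
    proof -
      have "u \<in> R" if "u \<in> D" "adj z u" for u
        using reach_step[of D v z u] z that RD by (auto simp: R_def)
      thus ?thesis using RD by (auto simp: D_def)
    qed
    have degv: "card {u\<in>R. adj v u} = 1"
    proof -
      have "card {u \<in> Xik. adj v u} = 2" using two(1)[OF st ik ir reach_refl] by (simp add: Xik_def)
      moreover have "p \<in> {u \<in> Xik. adj v u}" using pXik pW by simp
      moreover have "v \<in> R" by (simp add: R_def reach_refl)
      ultimately have "card ({u \<in> Xik. adj v u} - {p}) = 1"
        by (subst card_Diff_singleton) (auto intro: card_ge_0_finite)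
      thus ?thesis using clos[of v] \<open>v \<in> R\<close> by simp
    qed
    have degz: "card {u\<in>R. adj z u} = 2" if z: "z \<in> R - {v}" for z
    proof -
      have "card {u \<in> Xik. adj z u} = 2" using two(1)[OF st ik ir RK[of z, unfolded Xik_def]] z by (simp add: Xik_def)
      moreover have "p \<notin> {u \<in> Xik. adj z u}"
      proof
        assume "p \<in> {u \<in> Xik. adj z u}"
        hence "z \<in> {v, w}" using Np sym z RD by (auto simp: D_def)
        thus False using z wR by auto
      qed
      ultimately show ?thesis using clos[of z] z by simp
    qed
    have "(\<Sum>z\<in>R. card {u\<in>R. adj z u}) = card {u\<in>R. adj v u} + (\<Sum>z\<in>R - {v}. card {u\<in>R. adj z u})"
      using sum.remove[OF finR, of v] by (simp add: R_def reach_refl)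
    also have "\<dots> = 1 + 2 * card (R - {v})" using degv degz by simp
    finally have "odd (\<Sum>z\<in>R. card {u\<in>R. adj z u})" by simp
    thus False using handshake[OF finR] by simp
  qed
  have RX: "reach (X v c' i k) v z" if "z \<in> R" for z
    using that unfolding R_def mem_Collect_eq reach_def[of D]
  proof (induction rule: rtranclp_induct)
    case base thus ?case by (rule reach_refl)
  next
    case (step z' z)
    have z'X: "z' \<in> X v c' i k" using reach_in[OF step.IH vX] .
    have zD: "z \<in> D" "adj z' z" using step by auto
    have "z \<in> X v c' i k"
    proof (cases "z = v")
      case True thus ?thesis by (simp add: vX)
    next
      case False
      have zz: "z \<in> W" "c z = i \<or> c z = k" "z \<noteq> p" using zD False by (auto simp: D_def Xik_def X_def)
      have zR: "z \<in> R" using step by (auto simp: R_def reach_def intro: rtranclp.rtrancl_into_rtrancl)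
      have "z \<notin> S"
      proof
        assume zS: "z \<in> S"
        hence czi: "c z = i" using Scol zz m by auto
        have nav: "\<not> adj z v"
        proof
          assume "adj z v"
          hence "z = p" using uniq_col[OF st _ pW(2) zz(1) pW(1)] sym czi i_def by auto
          thus False using zz by simp
        qed
        have "reach (X v c i m) v z" using zS by (simp add: S_def Xim_def)
        moreover have "reach (X v c i k) v z" using RK[OF zR] by (simp add: Xik_def)
        ultimately show False using noC[OF st ik _ _ ir(1) ir(2) m(1)] m False nav by auto
      qed
      thus ?thesis using zz False unfolding c'_def by (auto simp: X_def)
    qed
    thus ?case using reach_step[OF step.IH z'X] zD by blast
  qed
  have r2: "reach (X v c' k i) v w" using RX[OF wR] X_sym by metis
  show False using noC[OF st' _ _ _ ir(2) ir(1) m(1) r2 r1 Np(2) wv] ik m by auto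
qed

lemma complete_comp:
  assumes st: "state x c" and r3: "3 \<le> r" and z: "reach W x z"
  shows "z = x \<or> z \<in> N x"
  using z unfolding reach_def
proof (induction rule: rtranclp_induct)
  case base thus ?case by simp
next
  case (step z' z)
  have xW: "x \<in> W" using st state_def by auto
  show ?case
  proof (cases "z' = x")
    case True thus ?thesis using step by (auto simp: N_def)
  next
    case False
    hence u: "z' \<in> N x" using step by simp
    have stu: "state z' (c(x := c z'))" using move[OF st] u by (auto simp: N_def)
    have cu: "card (N z') = r" using inj_N(2)[OF stu] .
    have sub: "insert x (N x - {z'}) \<subseteq> N z'"
      using clique[OF st r3 u] u sym xW by (auto simp: N_def)
    have rpos: "r > 0" using u inj_N(2)[OF st] fN card_gt_0_iff by force
    have "card (insert x (N x - {z'})) = r"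
      using rpos inj_N(2)[OF st] u irr fN by (simp add: N_def card_Diff_singleton)
    hence "N z' = insert x (N x - {z'})" using card_subset_eq[OF fN sub] cu by simp
    moreover have "z \<in> N z'" using step by (auto simp: N_def)
    ultimately show ?thesis by auto
  qed
qed

lemma deg2:
  assumes st: "state x c" and r2: "r = 2" and z: "reach W x z"
  shows "card (N z) = 2"
proof -
  have xW: "x \<in> W" using st state_def by auto
  have c01: "\<forall>u\<in>W-{x}. c u = 0 \<or> c u = 1" using st r2 unfolding state_def by (auto simp: less_2_cases_iff)
  have "X x c 0 1 = W" using c01 xW unfolding X_def by auto
  thus ?thesis using two(1)[OF st, of 0 1 z] r2 z by (simp add: N_def)
qed

lemma reach_sym: assumes "reach S a b" shows "reach S b a"
  using assms unfolding reach_def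
proof (induction rule: rtranclp_induct)
  case base thus ?case by simp
next
  case (step y z) thus ?case using sym by (auto intro: converse_rtranclp_into_rtranclp)
qed

lemma cycle:
  assumes xW: "x \<in> W" and d2: "\<And>z. reach W x z \<Longrightarrow> card (N z) = 2"
  shows "\<exists>vs. distinct vs \<and> set vs = {z. reach W x z} \<and> length vs \<ge> 3 \<and>
     (\<forall>k<length vs. N (vs!k) = {vs!((k+1) mod length vs), vs!((k + length vs - 1) mod length vs)})"
proof -
  define Z where "Z = {z. reach W x z}"
  have ZW: "Z \<subseteq> W" using reach_in xW by (auto simp: Z_def)
  have Zc: "u \<in> Z" if "z \<in> Z" "u \<in> N z" for z u
    using that reach_step[of W x z u] ZW by (auto simp: Z_def N_def)
  have dZ: "card (N z) = 2" if "z \<in> Z" for z using that d2 by (simp add: Z_def)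
  define P where "P = {vs. distinct vs \<and> set vs \<subseteq> Z \<and> vs \<noteq> [] \<and>
      (\<forall>k. Suc k < length vs \<longrightarrow> adj (vs!k) (vs!Suc k))}"
  have finP: "finite P"
    by (rule finite_subset[OF _ finite_subset_distinct[OF finite_subset[OF ZW fin]]]) (auto simp: P_def)
  have xZ: "x \<in> Z" by (simp add: Z_def reach_refl)
  have "[x] \<in> P" using xZ by (simp add: P_def)
  define M where "M = Max (length ` P)"
  have "M \<in> length ` P" unfolding M_def using finP \<open>[x] \<in> P\<close> by (intro Max_in) auto
  then obtain vs where vs: "vs \<in> P" "length vs = M" by auto
  have maxl: "length ws \<le> length vs" if "ws \<in> P" for ws
    using that finP vs(2) unfolding M_def by (simp add: Max_ge)
  define n where "n = length vs"
  have dv: "distinct vs" "set vs \<subseteq> Z" "vs \<noteq> []" and av: "\<And>k. Suc k < n \<Longrightarrow> adj (vs!k) (vs!Suc k)"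
    using vs(1) by (auto simp: P_def n_def)
  have n1: "n \<ge> 1" using dv(3) by (simp add: n_def Suc_le_eq)
  have vsZ: "vs!k \<in> Z" if "k < n" for k using that dv(2) nth_mem n_def by blast
  have vsW: "vs!k \<in> W" if "k < n" for k using vsZ[OF that] ZW by auto
  have endN: "N (vs!(n-1)) \<subseteq> set vs"
  proof
    fix b assume b: "b \<in> N (vs!(n-1))"
    show "b \<in> set vs"
    proof (rule ccontr)
      assume nb: "b \<notin> set vs"
      have "vs @ [b] \<in> P" unfolding P_def
      proof (intro CollectI conjI allI impI)
        show "distinct (vs @ [b])" using nb dv by simp
        show "set (vs @ [b]) \<subseteq> Z" using dv Zc[OF vsZ[of "n-1"] b] n1 by simp
        show "vs @ [b] \<noteq> []" by simp
      next
        fix k assume k: "Suc k < length (vs @ [b])"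
        show "adj ((vs @ [b]) ! k) ((vs @ [b]) ! Suc k)"
        proof (cases "Suc k < n")
          case True thus ?thesis using av[OF True] by (simp add: nth_append n_def)
        next
          case False
          hence "k = n - 1" using k by (simp add: n_def)
          thus ?thesis using b n1 by (simp add: nth_append n_def N_def)
        qed
      qed
      thus False using maxl by fastforce
    qed
  qed
  have startN: "N (vs!0) \<subseteq> set vs"
  proof
    fix b assume b: "b \<in> N (vs!0)"
    show "b \<in> set vs"
    proof (rule ccontr)
      assume nb: "b \<notin> set vs"
      have "b # vs \<in> P" unfolding P_def
      proof (intro CollectI conjI allI impI)
        show "distinct (b # vs)" using nb dv by simp
        show "set (b # vs) \<subseteq> Z" using dv Zc[OF vsZ[of 0] b] n1 by simp
        show "b # vs \<noteq> []" by simp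
      next
        fix k assume k: "Suc k < length (b # vs)"
        show "adj ((b # vs) ! k) ((b # vs) ! Suc k)"
        proof (cases k)
          case 0 thus ?thesis using b sym by (simp add: N_def)
        next
          case (Suc k') thus ?thesis using av[of k'] k by (simp add: n_def)
        qed
      qed
      thus False using maxl by fastforce
    qed
  qed
  have N0: "N (vs!0) \<subseteq> set vs - {vs!0}" using startN irr by (auto simp: N_def)
  have "2 \<le> card (set vs - {vs!0})"
    using card_mono[OF _ N0] dZ[OF vsZ[of 0]] n1 by simp
  hence n3: "n \<ge> 3" using dv n1 by (simp add: distinct_card n_def)
  have a01: "vs!1 \<in> N (vs!0)" using av[of 0] n3 vsW[of 1] by (simp add: N_def)
  obtain b where b: "b \<in> N (vs!0)" "b \<noteq> vs!1"
  proof -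
    have "card (N (vs!0)) = 2" using dZ[OF vsZ[of 0]] n1 by simp
    then obtain a1 a2 where "N (vs!0) = {a1, a2}" "a1 \<noteq> a2" using card_2_iff[THEN iffD1] by blast
    thus ?thesis using that a01 by blast
  qed
  have "b \<in> set vs" using b startN by blast
  then obtain t where t: "t < n" "vs!t = b" by (auto simp: in_set_conv_nth n_def)
  have t0: "t \<noteq> 0"
  proof
    assume "t = 0"
    hence "adj (vs!0) (vs!0)" using t b by (simp add: N_def)
    thus False using irr by blast
  qed
  have t1: "t \<noteq> 1" using t b by auto
  have tn: "t = n - 1"
  proof (rule ccontr)
    assume "t \<noteq> n - 1"
    hence tt: "t + 1 < n" using t by simp
    have "{vs!(t-1), vs!(t+1), vs!0} \<subseteq> N (vs!t)"
    proof -
      have "adj (vs!(t-1)) (vs!t)" using av[of "t-1"] t0 t by simp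
      moreover have "adj (vs!t) (vs!(t+1))" using av[of t] tt by simp
      moreover have "adj (vs!t) (vs!0)" using b t sym by (auto simp: N_def)
      ultimately show ?thesis using sym vsW t tt by (auto simp: N_def)
    qed
    moreover have "card {vs!(t-1), vs!(t+1), vs!0} = 3"
    proof -
      have l: "t - 1 < length vs" "t + 1 < length vs" "0 < length vs" using t tt by (auto simp: n_def)
      have "vs!(t-1) \<noteq> vs!(t+1)" using nth_eq_iff_index_eq[OF dv(1) l(1) l(2)] by simp
      moreover have "vs!(t-1) \<noteq> vs!0" using nth_eq_iff_index_eq[OF dv(1) l(1) l(3)] t0 t1 by simp
      moreover have "vs!(t+1) \<noteq> vs!0" using nth_eq_iff_index_eq[OF dv(1) l(2) l(3)] by simp
      ultimately show ?thesis by simp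
    qed
    ultimately have "3 \<le> card (N (vs!t))" using card_mono[OF fN] by metis
    thus False using dZ[OF vsZ[OF t(1)]] by simp
  qed
  have adjw: "adj (vs!(n-1)) (vs!0)" using b t tn sym by (auto simp: N_def)
  have adjn: "adj (vs!k) (vs!((k+1) mod n))" if "k < n" for k
  proof (cases "k + 1 < n")
    case True thus ?thesis using av[of k] by simp
  next
    case False
    hence "k = n - 1" using that by simp
    thus ?thesis using adjw n1 by simp
  qed
  have adjp: "adj (vs!k) (vs!((k + n - 1) mod n))" if "k < n" for k
  proof (cases k)
    case 0 thus ?thesis using adjw sym n1 by simp
  next
    case (Suc k')
    hence "(k + n - 1) mod n = k'" using that by simp
    thus ?thesis using av[of k'] sym Suc that by simp
  qed
  have Nk: "N (vs!k) = {vs!((k+1) mod n), vs!((k + n - 1) mod n)}" if k: "k < n" for k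
  proof -
    have sub: "{vs!((k+1) mod n), vs!((k + n - 1) mod n)} \<subseteq> N (vs!k)"
      using adjn[OF k] adjp[OF k] vsW n1 by (auto simp: N_def)
    have "(k+1) mod n \<noteq> (k + n - 1) mod n"
    proof
      assume h: "(k+1) mod n = (k + n - 1) mod n"
      show False
      proof (cases "k + 1 < n")
        case True
        hence "(k+1) mod n = k + 1" by simp
        moreover have "(k + n - 1) mod n = (if k = 0 then n - 1 else k - 1)"
          using k by (cases k) auto
        ultimately show False using h n3 True by (auto split: if_splits)
      next
        case False
        hence "k = n - 1" using k by simp
        hence "(k+1) mod n = 0" "(k + n - 1) mod n = n - 2" using n3 by (auto simp: mod_if)
        thus False using h n3 by simp
      qed
    qed
    moreover have "(k+1) mod n < length vs" "(k + n - 1) mod n < length vs" using n1 unfolding n_def by (auto intro: mod_less_divisor)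
    ultimately have "vs!((k+1) mod n) \<noteq> vs!((k + n - 1) mod n)"
      using nth_eq_iff_index_eq[OF dv(1)] by blast
    hence "card {vs!((k+1) mod n), vs!((k + n - 1) mod n)} = 2" by simp
    thus ?thesis using card_subset_eq[OF fN sub] dZ[OF vsZ[OF k]] by simp
  qed
  have clos: "u \<in> set vs" if zu: "z \<in> set vs" "u \<in> N z" for z u
  proof -
    obtain k where k: "k < n" "vs!k = z" using zu(1) by (auto simp: in_set_conv_nth n_def)
    have "(k+1) mod n < length vs" "(k + n - 1) mod n < length vs" using n1 unfolding n_def by (auto intro: mod_less_divisor)
    thus ?thesis using Nk[OF k(1)] k zu(2) by (auto simp: n_def)
  qed
  have xin: "x \<in> set vs"
  proof -
    have "reach W x (vs!0)" using vsZ[of 0] n1 by (simp add: Z_def)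
    hence r: "reach W (vs!0) x" by (rule reach_sym)
    have "z \<in> set vs" if "reach W (vs!0) z" for z
      using that unfolding reach_def
    proof (induction rule: rtranclp_induct)
      case base show ?case using n1 nth_mem[of 0 vs] unfolding n_def by linarith
    next
      case (step y z) thus ?case using clos[of y z] by (auto simp: N_def)
    qed
    thus ?thesis using r by blast
  qed
  have "Z \<subseteq> set vs"
  proof
    fix z assume "z \<in> Z"
    hence "reach W x z" by (simp add: Z_def)
    thus "z \<in> set vs" unfolding reach_def
    proof (induction rule: rtranclp_induct)
      case base thus ?case using xin by simp
    next
      case (step y z) thus ?case using clos[of y z] by (auto simp: N_def)
    qed
  qed
  hence "set vs = Z" using dv by auto
  thus ?thesis using dv(1) n3 Nk unfolding Z_def n_def by blast
qed

lemma idx_ex: assumes "z \<in> set vs" shows "(SOME k. k < length vs \<and> vs!k = z) < length vs \<and> vs!(SOME k. k < length vs \<and> vs!k = z) = z"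
proof -
  have "\<exists>k. k < length vs \<and> vs!k = z" using assms by (auto simp: in_set_conv_nth)
  thus ?thesis by (rule someI_ex)
qed

lemma idx_nth: assumes "distinct vs" "k < length vs" shows "(SOME k'. k' < length vs \<and> vs!k' = vs!k) = k"
  using idx_ex[of "vs!k" vs] assms nth_eq_iff_index_eq by (metis nth_mem)

lemma edges_char:
  assumes dv: "distinct vs" and n3: "length vs \<ge> 3"
    and Nk: "\<forall>k<length vs. N (vs!k) = {vs!((k+1) mod length vs), vs!((k + length vs - 1) mod length vs)}"
    and a: "a \<in> set vs" and b: "b \<in> set vs" and sW: "set vs \<subseteq> W"
  shows "adj a b \<longleftrightarrow> (\<exists>k<length vs. {a,b} = {vs!k, vs!((k+1) mod length vs)})"
proof -
  define n where "n = length vs"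
  have Wv: "vs!k \<in> W" if "k < n" for k using sW that nth_mem n_def by blast
  show ?thesis
  proof
    assume ab: "adj a b"
    obtain ka where ka: "ka < n" "vs!ka = a" using a by (auto simp: in_set_conv_nth n_def)
    have "b \<in> N a" using ab b Wv by (auto simp: N_def in_set_conv_nth n_def)
    hence "b = vs!((ka+1) mod n) \<or> b = vs!((ka + n - 1) mod n)" using Nk ka by (auto simp: n_def)
    thus "\<exists>k<length vs. {a,b} = {vs!k, vs!((k+1) mod length vs)}"
    proof
      assume "b = vs!((ka+1) mod n)" thus ?thesis using ka by (auto simp: n_def)
    next
      assume bb: "b = vs!((ka + n - 1) mod n)"
      define k where "k = (ka + n - 1) mod n"
      have "k < n" using ka by (simp add: k_def)
      moreover have "(k + 1) mod n = ka"
      proof -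
        have "(k + 1) mod n = (ka + n - 1 + 1) mod n" unfolding k_def by (metis mod_add_left_eq)
        also have "ka + n - 1 + 1 = ka + n" using n3 by (simp add: n_def)
        finally show ?thesis using ka by simp
      qed
      ultimately show ?thesis using bb ka by (auto simp: n_def k_def)
    qed
  next
    assume "\<exists>k<length vs. {a,b} = {vs!k, vs!((k+1) mod length vs)}"
    then obtain k where k: "k < n" "{a,b} = {vs!k, vs!((k+1) mod n)}" by (auto simp: n_def)
    have "vs!((k+1) mod n) \<in> N (vs!k)" using Nk k by (simp add: n_def)
    hence "adj (vs!k) (vs!((k+1) mod n))" by (simp add: N_def)
    thus "adj a b" using k(2) sym by (auto simp: doubleton_eq_iff)
  qed
qed

lemma odd_len:
  assumes st: "state x c" and r2: "r = 2" and dv: "distinct vs" and sv: "set vs = {z. reach W x z}"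
    and n3: "length vs \<ge> 3"
    and Nk: "\<forall>k<length vs. N (vs!k) = {vs!((k+1) mod length vs), vs!((k + length vs - 1) mod length vs)}"
  shows "odd (length vs)"
proof (rule ccontr)
  assume ev: "\<not> odd (length vs)"
  define n where "n = length vs"
  have ev2: "2 dvd n" using ev by (simp add: n_def)
  have xW: "x \<in> W" using st state_def by auto
  have xin: "x \<in> set vs" using sv by (simp add: reach_refl)
  have svW: "set vs \<subseteq> W" using sv reach_in xW by auto
  define idx where "idx z = (SOME k. k < n \<and> vs!k = z)" for z
  define g where "g z = (if z \<in> set vs then idx z mod 2 else c z)" for z
  have gprop: "(\<forall>u\<in>W. g u < r) \<and> (\<forall>u\<in>W. \<forall>v\<in>W. adj u v \<longrightarrow> g u \<noteq> g v)"
  proof (intro conjI ballI impI)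
    fix u assume u: "u \<in> W"
    show "g u < r"
    proof (cases "u \<in> set vs")
      case True thus ?thesis using r2 by (simp add: g_def)
    next
      case False
      hence "u \<noteq> x" using xin by auto
      thus ?thesis using st u False unfolding state_def g_def by auto
    qed
  next
    fix u v assume uv: "u \<in> W" "v \<in> W" "adj u v"
    show "g u \<noteq> g v"
    proof (cases "u \<in> set vs")
      case True
      hence vin: "v \<in> set vs" using uv sv reach_step[of W x u v] by auto
      obtain ku where ku: "ku < n" "vs!ku = u" using True by (auto simp: in_set_conv_nth n_def)
      obtain kv where kv: "kv < n" "vs!kv = v" using vin by (auto simp: in_set_conv_nth n_def)
      have iu: "idx u = ku" using idx_nth[OF dv, of ku] ku by (simp add: idx_def n_def)
      have iv: "idx v = kv" using idx_nth[OF dv, of kv] kv by (simp add: idx_def n_def)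
      have "v \<in> N u" using uv by (simp add: N_def)
      hence "v = vs!((ku+1) mod n) \<or> v = vs!((ku + n - 1) mod n)" using Nk ku by (auto simp: n_def)
      moreover have l: "(ku+1) mod n < length vs" "(ku+n-1) mod n < length vs" "kv < length vs"
        using ku kv unfolding n_def by (auto intro: mod_less_divisor)
      ultimately have "kv = (ku+1) mod n \<or> kv = (ku + n - 1) mod n"
        using nth_eq_iff_index_eq[OF dv l(3) l(1)] nth_eq_iff_index_eq[OF dv l(3) l(2)] kv(2) by auto
      moreover have "(ku+1) mod n mod 2 = (ku + 1) mod 2" using ev2 by (simp add: mod_mod_cancel)
      moreover have "(ku + n - 1) mod n mod 2 = (ku + 1) mod 2"
      proof -
        have m1: "(ku + n - 1) mod n mod 2 = (ku + n - 1) mod 2" using ev2 by (simp add: mod_mod_cancel)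
        have "n \<ge> 3" using n3 by (simp add: n_def)
        moreover obtain q where q: "n = 2 * q" using ev2 by blast
        ultimately have "ku + n - 1 = (ku + 1) + 2 * (q - 1)" by simp
        hence "(ku + n - 1) mod 2 = (ku + 1) mod 2" by simp
        thus ?thesis using m1 by simp
      qed
      ultimately have "kv mod 2 = (ku + 1) mod 2" by auto
      hence "kv mod 2 \<noteq> ku mod 2" by presburger
      thus ?thesis using True vin iu iv by (simp add: g_def)
    next
      case False
      hence vout: "v \<notin> set vs"
        using uv sv reach_step[of W x v u] sym by auto
      have "u \<noteq> x" "v \<noteq> x" using False vout xin by auto
      thus ?thesis using st uv False vout unfolding state_def g_def by auto
    qed
  qed
  thus False using nocol by blast
qed

end


lemma simple_edge: "simple_graph V E \<Longrightarrow> e \<in> E \<Longrightarrow> \<exists>u v. e = {u,v} \<and> u \<noteq> v \<and> u \<in> V \<and> v \<in> V"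
  unfolding simple_graph_def by blast

lemma simple_irr: "simple_graph V E \<Longrightarrow> {u,u} \<notin> E"
  using simple_edge[of V E "{u,u}"] by (auto simp: doubleton_eq_iff)

lemma nie_remove:
  assumes G: "simple_graph V E" and fS: "finite S" and v: "v \<in> S"
  shows "num_induced_edges E S = num_induced_edges E (S - {v}) + card {u \<in> S. {v,u} \<in> E}"
proof -
  have split: "induced_edges E S = induced_edges E (S - {v}) \<union> {e \<in> E. e \<subseteq> S \<and> v \<in> e}"
    by (auto simp: induced_edges_def)
  have disj: "induced_edges E (S - {v}) \<inter> {e \<in> E. e \<subseteq> S \<and> v \<in> e} = {}"
    by (auto simp: induced_edges_def)
  have fin1: "finite (induced_edges E (S - {v}))"
    by (rule finite_subset[of _ "Pow S"]) (auto simp: induced_edges_def fS)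
  have fin2: "finite {e \<in> E. e \<subseteq> S \<and> v \<in> e}"
    by (rule finite_subset[of _ "Pow S"]) (auto simp: fS)
  have img: "{e \<in> E. e \<subseteq> S \<and> v \<in> e} = (\<lambda>u. {v,u}) ` {u \<in> S. {v,u} \<in> E}"
  proof
    show "{e \<in> E. e \<subseteq> S \<and> v \<in> e} \<subseteq> (\<lambda>u. {v,u}) ` {u \<in> S. {v,u} \<in> E}"
    proof
      fix e assume e: "e \<in> {e \<in> E. e \<subseteq> S \<and> v \<in> e}"
      then obtain a b where ab: "e = {a,b}" "a \<noteq> b" using simple_edge[OF G] by blast
      show "e \<in> (\<lambda>u. {v,u}) ` {u \<in> S. {v,u} \<in> E}"
      proof (cases "a = v")
        case True thus ?thesis using e ab by auto
      next
        case False
        hence "b = v" using e ab by auto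
        hence "e = {v,a}" using ab by auto
        thus ?thesis using e ab by auto
      qed
    qed
    show "(\<lambda>u. {v,u}) ` {u \<in> S. {v,u} \<in> E} \<subseteq> {e \<in> E. e \<subseteq> S \<and> v \<in> e}" using v by auto
  qed
  have inj: "inj_on (\<lambda>u. {v,u}) {u \<in> S. {v,u} \<in> E}"
    by (auto simp: inj_on_def doubleton_eq_iff)
  have "num_induced_edges E S = card (induced_edges E (S - {v})) + card {e \<in> E. e \<subseteq> S \<and> v \<in> e}"
    unfolding num_induced_edges_def split using card_Un_disjoint[OF fin1 fin2 disj] .
  also have "card {e \<in> E. e \<subseteq> S \<and> v \<in> e} = card {u \<in> S. {v,u} \<in> E}"
    unfolding img using card_image[OF inj] .
  finally show ?thesis by (simp add: num_induced_edges_def)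
qed

lemma chi_le: assumes "colorable V E k" shows "chi V E \<le> k"
  unfolding chi_def using assms by (rule Least_le)

lemma pc_unfold:
  assumes "partitioned_coloring V E a r x L"
  shows "x \<in> V"
    "\<And>k j. k \<in> {1..a} \<Longrightarrow> j \<in> {1..r k} \<Longrightarrow> L k j \<subseteq> V \<and> L k j \<noteq> {} \<and> x \<notin> L k j \<and> (\<forall>u\<in>L k j. \<forall>v\<in>L k j. {u, v} \<notin> E)"
    "\<And>k j k' j'. k \<in> {1..a} \<Longrightarrow> j \<in> {1..r k} \<Longrightarrow> k' \<in> {1..a} \<Longrightarrow> j' \<in> {1..r k'} \<Longrightarrow> (k, j) \<noteq> (k', j') \<Longrightarrow> L k j \<inter> L k' j' = {}"
    "V = {x} \<union> (\<Union>k\<in>{1..a}. \<Union>j\<in>{1..r k}. L k j)"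
  using assms unfolding partitioned_coloring_def by blast+

lemma nocol_red:
  assumes G: "simple_graph V E"
    and rsum: "1 + (\<Sum>k=1..a. r k) = chi V E"
    and pi: "partitioned_coloring V E a r x L"
    and i: "1 \<le> i" "i \<le> a"
    and W: "W = {x} \<union> U_part r L i"
    and g1: "\<forall>u\<in>W. g u < r i" and g2: "\<forall>u\<in>W. \<forall>v\<in>W. {u,v} \<in> E \<longrightarrow> g u \<noteq> g v"
  shows False
proof -
  note p = pc_unfold[OF pi]
  define P where "P = Sigma ({1..a}-{i}) (\<lambda>k. {1..r k})"
  have finP: "finite P" by (simp add: P_def)
  have cP: "card P = (\<Sum>k\<in>{1..a}-{i}. r k)" by (simp add: P_def)
  obtain h where h: "bij_betw h P {0..<card P}" using ex_bij_betw_finite_nat[OF finP] by blast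
  have sumr: "(\<Sum>k=1..a. r k) = r i + (\<Sum>k\<in>{1..a}-{i}. r k)"
    using sum.remove[of "{1..a}" i r] i by simp
  have memb: "\<exists>p\<in>P. u \<in> L (fst p) (snd p)" if u: "u \<in> V" "u \<notin> W" for u
  proof -
    have "u \<noteq> x" using u W by auto
    then obtain k j where kj: "k \<in> {1..a}" "j \<in> {1..r k}" "u \<in> L k j" using u p(4) by auto
    have "k \<noteq> i" using kj u W by (auto simp: U_part_def)
    hence "(k,j) \<in> P" using kj by (auto simp: P_def)
    thus ?thesis using kj by (intro bexI[of _ "(k,j)"]) auto
  qed
  define pick where "pick u = (SOME p. p \<in> P \<and> u \<in> L (fst p) (snd p))" for u
  have pick: "pick u \<in> P \<and> u \<in> L (fst (pick u)) (snd (pick u))" if "u \<in> V" "u \<notin> W" for u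
    using someI_ex[OF memb[OF that, unfolded Bex_def]] by (simp add: pick_def)
  define col where "col u = (if u \<in> W then g u else r i + h (pick u))" for u
  have "colorable V E (r i + card P)" unfolding colorable_def
  proof (intro exI[of _ col] conjI ballI impI)
    fix u assume u: "u \<in> V"
    show "col u < r i + card P"
    proof (cases "u \<in> W")
      case True hence "g u < r i" using g1 by blast
      thus ?thesis using True by (simp add: col_def)
    next
      case False
      hence "h (pick u) < card P" using pick[OF u False] h by (auto simp: bij_betw_def)
      thus ?thesis using False by (simp add: col_def)
    qed
  next
    fix u v assume uv: "u \<in> V" "v \<in> V" "{u,v} \<in> E"
    show "col u \<noteq> col v"
    proof (cases "u \<in> W")
      case True
      show ?thesis
      proof (cases "v \<in> W")
        case True thus ?thesis using \<open>u \<in> W\<close> g2 uv by (simp add: col_def)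
      next
        case False
        have "g u < r i" using g1 \<open>u \<in> W\<close> by blast
        thus ?thesis using False \<open>u \<in> W\<close> by (simp add: col_def)
      qed
    next
      case False
      note uF = False
      show ?thesis
      proof (cases "v \<in> W")
        case True
        have "g v < r i" using g1 True by blast
        thus ?thesis using True uF by (simp add: col_def)
      next
        case False
        have pu: "pick u \<in> P" "u \<in> L (fst (pick u)) (snd (pick u))" using pick[OF uv(1) uF] by auto
        have pv: "pick v \<in> P" "v \<in> L (fst (pick v)) (snd (pick v))" using pick[OF uv(2) False] by auto
        have "pick u \<noteq> pick v"
        proof
          assume eq: "pick u = pick v"
          have "fst (pick u) \<in> {1..a}" "snd (pick u) \<in> {1..r (fst (pick u))}" using pu by (auto simp: P_def)
          hence "\<forall>w\<in>L (fst (pick u)) (snd (pick u)). \<forall>w'\<in>L (fst (pick u)) (snd (pick u)). {w, w'} \<notin> E"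
            using p(2) by blast
          thus False using pu pv eq uv(3) by auto
        qed
        hence "h (pick u) \<noteq> h (pick v)" using h pu pv by (auto simp: bij_betw_def inj_on_def)
        thus ?thesis using uF False by (simp add: col_def)
      qed
    qed
  qed
  hence "chi V E \<le> r i + card P" by (rule chi_le)
  thus False using rsum sumr cP by simp
qed

lemma degle_red:
  assumes G: "simple_graph V E"
    and pi: "partitioned_coloring V E a r x L"
    and minimal: "\<forall>y L'. partitioned_coloring V E a r y L' \<longrightarrow> pc_cost E a r L \<le> pc_cost E a r L'"
    and i: "1 \<le> i" "i \<le> a"
    and W: "W = {x} \<union> U_part r L i"
    and nc: "\<And>g. \<not> ((\<forall>u\<in>W. g u < r i) \<and> (\<forall>u\<in>W. \<forall>v\<in>W. {u,v} \<in> E \<longrightarrow> g u \<noteq> g v))"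
    and y: "y \<in> W" and f1: "\<forall>u\<in>W-{y}. f u < r i"
    and f2: "\<forall>u\<in>W-{y}. \<forall>v\<in>W-{y}. {u,v} \<in> E \<longrightarrow> f u \<noteq> f v"
  shows "num_induced_edges E (W - {x}) \<le> num_induced_edges E (W - {y})"
proof -
  note p = pc_unfold[OF pi]
  have iA: "i \<in> {1..a}" using i by simp
  have xU: "x \<notin> U_part r L i" using p(2)[OF iA] by (auto simp: U_part_def)
  have WV: "W \<subseteq> V" using W p(4) iA by (auto simp: U_part_def)
  have Wx: "W - {x} = U_part r L i" using W xU by auto
  have ex: "\<exists>u\<in>W-{y}. f u = c" if c: "c < r i" for c
  proof (rule ccontr)
    assume ne: "\<not> ?thesis"
    have "(\<forall>u\<in>W. (f(y:=c)) u < r i) \<and> (\<forall>u\<in>W. \<forall>v\<in>W. {u,v} \<in> E \<longrightarrow> (f(y:=c)) u \<noteq> (f(y:=c)) v)"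
    proof (intro conjI ballI impI)
      fix u assume "u \<in> W" thus "(f(y:=c)) u < r i" using f1 c by auto
    next
      fix u v assume uv: "u \<in> W" "v \<in> W" "{u,v} \<in> E"
      show "(f(y:=c)) u \<noteq> (f(y:=c)) v"
      proof (cases "u = y")
        case True
        hence "v \<noteq> y" using uv simple_irr[OF G] by auto
        thus ?thesis using True ne uv by auto
      next
        case False
        show ?thesis
        proof (cases "v = y")
          case True thus ?thesis using False ne uv by auto
        next
          case F2: False thus ?thesis using False uv f2 by auto
        qed
      qed
    qed
    thus False using nc by blast
  qed
  define L' where "L' k j = (if k = i then {u \<in> W - {y}. f u = j - 1} else L k j)" for k j
  have yV: "y \<in> V" using y WV by auto
  have yL: "y \<notin> L k j" if "k \<in> {1..a}" "j \<in> {1..r k}" "k \<noteq> i" for k j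
  proof
    assume yk: "y \<in> L k j"
    show False
    proof (cases "y = x")
      case True thus False using p(2)[OF that(1,2)] yk by auto
    next
      case False
      then obtain j' where j': "j' \<in> {1..r i}" "y \<in> L i j'" using y W by (auto simp: U_part_def)
      thus False using p(3)[OF iA j'(1) that(1,2)] that(3) yk by auto
    qed
  qed
  have WL: "W - {y} \<subseteq> {x} \<union> (\<Union>j\<in>{1..r i}. L i j)" using W by (auto simp: U_part_def)
  have L'V: "\<forall>k\<in>{1..a}. \<forall>j\<in>{1..r k}. L' k j \<subseteq> V"
  proof (intro ballI)
    fix k j assume k: "k \<in> {1..a}" and j: "j \<in> {1..r k}"
    show "L' k j \<subseteq> V" using p(2)[OF k j] WV by (auto simp: L'_def)
  qed
  have pc': "partitioned_coloring V E a r y L'" unfolding partitioned_coloring_def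
  proof (intro conjI ballI impI)
    show "y \<in> V" by fact
  next
    fix k j assume k: "k \<in> {1..a}" and j: "j \<in> {1..r k}"
    show "L' k j \<subseteq> V"
      using p(2)[OF k j] WV by (auto simp: L'_def)
    show "L' k j \<noteq> {}"
    proof (cases "k = i")
      case True
      hence "j - 1 < r i" using j by auto
      thus ?thesis using ex True by (auto simp: L'_def)
    next
      case False thus ?thesis using p(2)[OF k j] by (simp add: L'_def)
    qed
    show "y \<notin> L' k j" using yL[OF k j] by (auto simp: L'_def)
    show "\<And>u v. u \<in> L' k j \<Longrightarrow> v \<in> L' k j \<Longrightarrow> {u, v} \<notin> E"
    proof (cases "k = i")
      case True
      fix u v assume uv: "u \<in> L' k j" "v \<in> L' k j"
      show "{u, v} \<notin> E"
      proof
        assume e: "{u,v} \<in> E"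
        have "u \<in> W - {y}" "v \<in> W - {y}" "f u = f v" using True uv by (auto simp: L'_def)
        thus False using f2 e by blast
      qed
    next
      case False
      fix u v assume uv: "u \<in> L' k j" "v \<in> L' k j"
      thus "{u, v} \<notin> E" using p(2)[OF k j] False by (simp add: L'_def)
    qed
  next
    fix k j k' j' assume k: "k \<in> {1..a}" and j: "j \<in> {1..r k}" and k': "k' \<in> {1..a}"
      and j': "j' \<in> {1..r k'}" and ne: "(k, j) \<noteq> (k', j')"
    show "L' k j \<inter> L' k' j' = {}"
    proof (cases "k = i")
      case True
      show ?thesis
      proof (cases "k' = i")
        case True
        hence "j \<noteq> j'" using ne \<open>k = i\<close> by auto
        hence "j - 1 \<noteq> j' - 1" using j j' by auto
        thus ?thesis using True \<open>k = i\<close> by (auto simp: L'_def)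
      next
        case False
        have "L k' j' \<inter> ({x} \<union> (\<Union>j\<in>{1..r i}. L i j)) = {}"
          using p(2)[OF k' j'] p(3)[OF k' j' iA] False by blast
        thus ?thesis using True False WL by (auto simp: L'_def)
      qed
    next
      case False
      show ?thesis
      proof (cases "k' = i")
        case True
        have "L k j \<inter> ({x} \<union> (\<Union>j\<in>{1..r i}. L i j)) = {}"
          using p(2)[OF k j] p(3)[OF k j iA] False by blast
        thus ?thesis using True False WL by (auto simp: L'_def)
      next
        case F2: False thus ?thesis using False p(3)[OF k j k' j' ne] by (simp add: L'_def)
      qed
    qed
  next
    show "V = {y} \<union> (\<Union>k\<in>{1..a}. \<Union>j\<in>{1..r k}. L' k j)"
    proof
      show "V \<subseteq> {y} \<union> (\<Union>k\<in>{1..a}. \<Union>j\<in>{1..r k}. L' k j)"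
      proof
        fix u assume u: "u \<in> V"
        show "u \<in> {y} \<union> (\<Union>k\<in>{1..a}. \<Union>j\<in>{1..r k}. L' k j)"
        proof (cases "u \<in> W")
          case True
          show ?thesis
          proof (cases "u = y")
            case False
            hence "f u < r i" using f1 True by auto
            hence "f u + 1 \<in> {1..r i}" by auto
            moreover have "u \<in> L' i (f u + 1)" using True False by (simp add: L'_def)
            ultimately show ?thesis using iA by blast
          qed simp
        next
          case False
          hence "u \<noteq> x" using W by auto
          then obtain k j where kj: "k \<in> {1..a}" "j \<in> {1..r k}" "u \<in> L k j" using u p(4) by auto
          have "k \<noteq> i" using kj False W by (auto simp: U_part_def)
          hence "u \<in> L' k j" using kj by (simp add: L'_def)
          thus ?thesis using kj by blast
        qed
      qed
      show "{y} \<union> (\<Union>k\<in>{1..a}. \<Union>j\<in>{1..r k}. L' k j) \<subseteq> V"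
        using yV L'V by blast
    qed
  qed
  have le: "pc_cost E a r L \<le> pc_cost E a r L'" using minimal pc' by blast
  have Uk: "U_part r L' k = U_part r L k" if "k \<noteq> i" for k
    using that by (simp add: U_part_def L'_def)
  have Ui: "U_part r L' i = W - {y}"
  proof
    show "U_part r L' i \<subseteq> W - {y}" by (auto simp: U_part_def L'_def)
    show "W - {y} \<subseteq> U_part r L' i"
    proof
      fix u assume u: "u \<in> W - {y}"
      hence "f u < r i" using f1 by blast
      hence "f u + 1 \<in> {1..r i}" by auto
      thus "u \<in> U_part r L' i" using u unfolding U_part_def L'_def by force
    qed
  qed
  have finA: "finite {1..a}" by simp
  have "pc_cost E a r L = num_induced_edges E (W - {x}) + (\<Sum>k\<in>{1..a}-{i}. num_induced_edges E (U_part r L k))"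
    unfolding pc_cost_def using sum.remove[OF finA iA] Wx by simp
  moreover have "pc_cost E a r L' = num_induced_edges E (W - {y}) + (\<Sum>k\<in>{1..a}-{i}. num_induced_edges E (U_part r L k))"
    unfolding pc_cost_def using sum.remove[OF finA iA, of "\<lambda>k. num_induced_edges E (U_part r L' k)"] Ui Uk by simp
  ultimately show ?thesis using le by simp
qed


theorem lemma3p2:
  fixes V :: "'a set" and E :: "'a set set" and a :: nat and r :: "nat \<Rightarrow> nat"
    and x :: 'a and L :: "nat \<Rightarrow> nat \<Rightarrow> 'a set" and i :: nat
  assumes G: "simple_graph V E"
    and crit: "\<exists>v. critical_vertex V E v"
    and a: "a \<ge> 1"
    and rpos: "\<forall>k\<in>{1..a}. r k > 0"
    and rsum: "1 + (\<Sum>k=1..a. r k) = chi V E"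
    and pi: "partitioned_coloring V E a r x L"
    and minimal: "\<forall>y L'. partitioned_coloring V E a r y L' \<longrightarrow> pc_cost E a r L \<le> pc_cost E a r L'"
    and i: "1 \<le> i" "i \<le> a"
    and deg: "degree (induced_edges E (component E ({x} \<union> U_part r L i) x)) x = r i"
  shows "(r i \<ge> 3 \<longrightarrow> complete_graph (component E ({x} \<union> U_part r L i) x)
                        (induced_edges E (component E ({x} \<union> U_part r L i) x))) \<and>
         (r i = 2 \<longrightarrow> odd_cycle (component E ({x} \<union> U_part r L i) x)
                        (induced_edges E (component E ({x} \<union> U_part r L i) x)))"
proof -
  define W where "W = {x} \<union> U_part r L i"
  define Z where "Z = component E W x"
  note p = pc_unfold[OF pi]
  have iA: "i \<in> {1..a}" using i by simp
  have WV: "W \<subseteq> V" using p(4) iA by (auto simp: W_def U_part_def)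
  have finW: "finite W" using G WV finite_subset unfolding simple_graph_def by blast
  have xW: "x \<in> W" by (simp add: W_def)
  have nc: "\<And>g. \<not> ((\<forall>u\<in>W. g u < r i) \<and> (\<forall>u\<in>W. \<forall>v\<in>W. {u,v} \<in> E \<longrightarrow> g u \<noteq> g v))"
    using nocol_red[OF G rsum pi i W_def] by blast
  have xU: "x \<notin> U_part r L i" using p(2)[OF iA] by (auto simp: U_part_def)
  define f0 where "f0 u = (SOME j. j \<in> {1..r i} \<and> u \<in> L i j) - 1" for u
  have f0s: "(SOME j. j \<in> {1..r i} \<and> u \<in> L i j) \<in> {1..r i} \<and> u \<in> L i (SOME j. j \<in> {1..r i} \<and> u \<in> L i j)"
    if "u \<in> W - {x}" for u
  proof -
    have "\<exists>j. j \<in> {1..r i} \<and> u \<in> L i j" using that by (auto simp: W_def U_part_def)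
    thus ?thesis by (rule someI_ex)
  qed
  have f01: "\<forall>u\<in>W-{x}. f0 u < r i"
  proof
    fix u assume "u \<in> W - {x}"
    from f0s[OF this] show "f0 u < r i" unfolding f0_def by auto
  qed
  have f02: "\<forall>u\<in>W-{x}. \<forall>v\<in>W-{x}. {u,v} \<in> E \<longrightarrow> f0 u \<noteq> f0 v"
  proof (intro ballI impI notI)
    fix u v assume u: "u \<in> W - {x}" and v: "v \<in> W - {x}" and e: "{u,v} \<in> E" and eq: "f0 u = f0 v"
    have su: "(SOME j. j \<in> {1..r i} \<and> u \<in> L i j) \<in> {1..r i}" using f0s[OF u] by blast
    have sv: "(SOME j. j \<in> {1..r i} \<and> v \<in> L i j) \<in> {1..r i}" using f0s[OF v] by blast
    have "(SOME j. j \<in> {1..r i} \<and> u \<in> L i j) = (SOME j. j \<in> {1..r i} \<and> v \<in> L i j)"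
      using eq su sv unfolding f0_def by auto
    hence "u \<in> L i (SOME j. j \<in> {1..r i} \<and> u \<in> L i j)" "v \<in> L i (SOME j. j \<in> {1..r i} \<and> u \<in> L i j)"
      using f0s[OF u] f0s[OF v] by auto
    thus False using p(2)[OF iA su] e by blast
  qed
  have Zdef: "Z = {y. (\<lambda>u v. u \<in> W \<and> v \<in> W \<and> {u, v} \<in> E)\<^sup>*\<^sup>* x y \<and> y \<in> W}"
    by (simp add: Z_def component_def)
  have Nx: "{u. {x,u} \<in> induced_edges E Z \<and> u \<noteq> x} = {u\<in>W. {x,u} \<in> E}"
  proof
    show "{u. {x,u} \<in> induced_edges E Z \<and> u \<noteq> x} \<subseteq> {u\<in>W. {x,u} \<in> E}"
      using Zdef by (auto simp: induced_edges_def)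
    show "{u\<in>W. {x,u} \<in> E} \<subseteq> {u. {x,u} \<in> induced_edges E Z \<and> u \<noteq> x}"
    proof
      fix u assume u: "u \<in> {u\<in>W. {x,u} \<in> E}"
      hence "u \<in> Z" "x \<in> Z" using xW by (auto simp: Zdef)
      moreover have "u \<noteq> x" using u simple_irr[OF G] by auto
      ultimately show "u \<in> {u. {x,u} \<in> induced_edges E Z \<and> u \<noteq> x}" using u by (auto simp: induced_edges_def)
    qed
  qed
  have degx: "card {u\<in>W. {x,u} \<in> E} = r i"
    using deg Nx unfolding degree_def W_def[symmetric] Z_def[symmetric] by simp
  have degle: "card {u\<in>W. {y,u} \<in> E} \<le> r i"
    if y: "y \<in> W" and f1: "\<forall>u\<in>W-{y}. f u < r i" and f2: "\<forall>u\<in>W-{y}. \<forall>v\<in>W-{y}. {u,v} \<in> E \<longrightarrow> f u \<noteq> f v"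
    for y f
  proof -
    have "num_induced_edges E (W - {x}) \<le> num_induced_edges E (W - {y})"
      using degle_red[OF G pi minimal i W_def nc y f1 f2] .
    moreover have "num_induced_edges E W = num_induced_edges E (W - {x}) + card {u \<in> W. {x,u} \<in> E}"
      using nie_remove[OF G finW xW] .
    moreover have "num_induced_edges E W = num_induced_edges E (W - {y}) + card {u \<in> W. {y,u} \<in> E}"
      using nie_remove[OF G finW y] .
    ultimately show ?thesis using degx by linarith
  qed
  interpret C: crit W "\<lambda>u v. {u,v} \<in> E" "r i"
  proof
    show "finite W" by fact
    show "\<And>u v. {u,v} \<in> E \<Longrightarrow> {v,u} \<in> E" by (simp add: insert_commute)
    show "\<And>u. {u,u} \<notin> E" using simple_irr[OF G] by blast
    show "\<And>f. \<not> ((\<forall>u\<in>W. f u < r i) \<and> (\<forall>u\<in>W. \<forall>v\<in>W. {u,v} \<in> E \<longrightarrow> f u \<noteq> f v))" by (rule nc)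
    show "\<And>y f. y \<in> W \<Longrightarrow> (\<forall>u\<in>W-{y}. f u < r i) \<Longrightarrow>
        (\<forall>u\<in>W-{y}. \<forall>v\<in>W-{y}. {u,v} \<in> E \<longrightarrow> f u \<noteq> f v) \<Longrightarrow> card {u\<in>W. {y,u} \<in> E} \<le> r i"
      using degle by blast
  qed
  have st: "C.state x f0" unfolding C.state_def using xW f01 f02 by blast
  have ZR: "Z = {z. C.reach W x z}"
  proof -
    have "C.reach W x z \<Longrightarrow> z \<in> W" for z using C.reach_in xW by blast
    thus ?thesis unfolding Zdef C.reach_def by blast
  qed
  have NxC: "C.N x = {u\<in>W. {x,u} \<in> E}" by (simp add: C.N_def)
  have part1: "r i \<ge> 3 \<longrightarrow> complete_graph Z (induced_edges E Z)"
  proof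
    assume r3: "r i \<ge> 3"
    have inN: "u = x \<or> u \<in> C.N x" if "u \<in> Z" for u using C.complete_comp[OF st r3] that ZR by blast
    show "complete_graph Z (induced_edges E Z)" unfolding complete_graph_def induced_edges_def
    proof (intro ballI impI CollectI conjI)
      fix u v assume u: "u \<in> Z" and v: "v \<in> Z" and uv: "u \<noteq> v"
      show "{u,v} \<subseteq> Z" using u v by simp
      show "{u,v} \<in> E"
      proof (cases "u = x")
        case True
        hence "v \<in> C.N x" using inN[OF v] uv by auto
        thus ?thesis using True by (simp add: C.N_def)
      next
        case False
        hence un: "u \<in> C.N x" using inN[OF u] by auto
        show ?thesis
        proof (cases "v = x")
          case True thus ?thesis using un by (simp add: C.N_def insert_commute)
        next
          case False
          hence "v \<in> C.N x" using inN[OF v] by auto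
          thus ?thesis using C.clique[OF st r3 un _ uv] by simp
        qed
      qed
    qed
  qed
  have part2: "r i = 2 \<longrightarrow> odd_cycle Z (induced_edges E Z)"
  proof
    assume r2: "r i = 2"
    have d2: "\<And>z. C.reach W x z \<Longrightarrow> card (C.N z) = 2" using C.deg2[OF st r2] by blast
    obtain vs where vs: "distinct vs" "set vs = {z. C.reach W x z}" "length vs \<ge> 3"
      "\<forall>k<length vs. C.N (vs!k) = {vs!((k+1) mod length vs), vs!((k + length vs - 1) mod length vs)}"
      using C.cycle[OF xW d2] by blast
    have sZ: "set vs = Z" using vs(2) ZR by simp
    have sW: "set vs \<subseteq> W" using vs(2) C.reach_in xW by blast
    have od: "odd (length vs)" using C.odd_len[OF st r2 vs] .
    have F: "induced_edges E Z = {{vs ! k, vs ! ((k + 1) mod length vs)} | k. k < length vs}"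
    proof
      show "induced_edges E Z \<subseteq> {{vs ! k, vs ! ((k + 1) mod length vs)} | k. k < length vs}"
      proof
        fix e assume e: "e \<in> induced_edges E Z"
        hence "e \<in> E" by (simp add: induced_edges_def)
        then obtain u v where uv: "e = {u,v}" "u \<noteq> v" using simple_edge[OF G] by blast
        have "u \<in> set vs" "v \<in> set vs" "{u,v} \<in> E" using e uv sZ by (auto simp: induced_edges_def)
        then obtain k where "k < length vs" "{u,v} = {vs!k, vs!((k+1) mod length vs)}"
          using C.edges_char[OF vs(1) vs(3) vs(4) _ _ sW] by blast
        thus "e \<in> {{vs ! k, vs ! ((k + 1) mod length vs)} | k. k < length vs}" using uv by blast
      qed
      show "{{vs ! k, vs ! ((k + 1) mod length vs)} | k. k < length vs} \<subseteq> induced_edges E Z"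
      proof
        fix e assume "e \<in> {{vs ! k, vs ! ((k + 1) mod length vs)} | k. k < length vs}"
        then obtain k where k: "k < length vs" "e = {vs ! k, vs ! ((k + 1) mod length vs)}" by blast
        have m: "vs!k \<in> set vs" "vs ! ((k + 1) mod length vs) \<in> set vs" using k(1) by (auto intro!: nth_mem mod_less_divisor)
        have "{vs ! k, vs ! ((k + 1) mod length vs)} \<in> E"
          using C.edges_char[OF vs(1) vs(3) vs(4) m sW] k(1) by blast
        thus "e \<in> induced_edges E Z" using k m sZ by (auto simp: induced_edges_def)
      qed
    qed
    show "odd_cycle Z (induced_edges E Z)" unfolding odd_cycle_def
      using vs(1) sZ vs(3) od F by blast
  qed
  show ?thesis using part1 part2 unfolding Z_def W_def by blast
qed

end
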